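(* Let $X_1$ be a real random variable with c.d.f. $F$, mean $\mu$ and standard deviation $\sigma$. Let $0<a<b<1$ and $\xi:=1-(b-a)$. Then \[\sigma^{(a,b)}\leq\frac{\sigma}{1-\xi},\] and for any $1<q\leq2$, \[\sigma^{(a,b)}\leq\frac{\sqrt2\,\nu_q^{q/2}\,(\Delta^{(a,b)})^{1-\frac q2}}{1-\xi}.\] If $\sigma<+\infty$, $\xi<1/2$ and $\rho_{F,2}(\xi)<1/3$, then \[\sigma\leq\sqrt{\frac{1-\xi}{1-\left(\frac{2-\xi}{1-\xi}\right)\rho_{F,2}^2(\xi)}}\,\sigma^{(a,b)}.\]
   Context: $\nu_q:=(\mathbb{E}|X_1-\mu|^q)^{1/q}$, $\sigma=\nu_2$. $F^{-1}(u):=\inf\{t:F(t)\ge u\}$. $\mu^{(a,b)}:=\frac1{b-a}\int_a^bF^{-1}(u)du$, $(\sigma^{(a,b)})^2:=\frac1{b-a}\int_a^b(F^{-1}(u)-\mu^{(a,b)})^2du$, $\Delta^{(a,b)}:=F^{-1}(b)-F^{-1}(a)$. For $\xi>0$, $\rho_{F,2}(\xi):=\sup\{(\mathbb{E}[|X_1-\mu|^2Z])^{1/2}/\sigma: 0\le Z\le 1 \text{ a random variable (jointly defined with } X_1), \mathbb{E}Z\le\xi\}$ if $\sigma>0$, and $0$ if $\sigma=0$. *)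

theory Defs
  imports "HOL-Probability.Probability"
begin

definition cdfX :: "'a measure \<Rightarrow> ('a \<Rightarrow> real) \<Rightarrow> real \<Rightarrow> real" where
  "cdfX M X t = measure M {x \<in> space M. X x \<le> t}"

definition quantile :: "'a measure \<Rightarrow> ('a \<Rightarrow> real) \<Rightarrow> real \<Rightarrow> real" where
  "quantile M X u = Inf {t. u \<le> cdfX M X t}"

definition meanX :: "'a measure \<Rightarrow> ('a \<Rightarrow> real) \<Rightarrow> real" where
  "meanX M X = (\<integral>x. X x \<partial>M)"

definition nu :: "'a measure \<Rightarrow> ('a \<Rightarrow> real) \<Rightarrow> real \<Rightarrow> real" where
  "nu M X q = (\<integral>x. \<bar>X x - meanX M X\<bar> powr q \<partial>M) powr (1 / q)"

definition sigmaX :: "'a measure \<Rightarrow> ('a \<Rightarrow> real) \<Rightarrow> real" where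
  "sigmaX M X = nu M X 2"

definition mu_ab :: "'a measure \<Rightarrow> ('a \<Rightarrow> real) \<Rightarrow> real \<Rightarrow> real \<Rightarrow> real" where
  "mu_ab M X a b = (1 / (b - a)) * (LINT u:{a..b}|lborel. quantile M X u)"

definition sigma_ab :: "'a measure \<Rightarrow> ('a \<Rightarrow> real) \<Rightarrow> real \<Rightarrow> real \<Rightarrow> real" where
  "sigma_ab M X a b =
     sqrt ((1 / (b - a)) * (LINT u:{a..b}|lborel. (quantile M X u - mu_ab M X a b)\<^sup>2))"

definition Delta_ab :: "'a measure \<Rightarrow> ('a \<Rightarrow> real) \<Rightarrow> real \<Rightarrow> real \<Rightarrow> real" where
  "Delta_ab M X a b = quantile M X b - quantile M X a"

definition rho2 :: "'a measure \<Rightarrow> ('a \<Rightarrow> real) \<Rightarrow> real \<Rightarrow> real" where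
  "rho2 M X \<xi> =
     (if sigmaX M X = 0 then 0
      else Sup {sqrt (\<integral>x. (X x - meanX M X)\<^sup>2 * Z x \<partial>M) / sigmaX M X | Z.
                  Z \<in> borel_measurable M \<and> (\<forall>x\<in>space M. 0 \<le> Z x \<and> Z x \<le> 1)
                  \<and> (\<integral>x. Z x \<partial>M) \<le> \<xi>})"

end

theory Submission
  imports Defs
begin


lemma cdfX_eq: "prob_space M \<Longrightarrow> X \<in> borel_measurable M \<Longrightarrow> cdfX M X t = cdf (distr M borel X) t"
  by (simp add: cdfX_def cdf_def measure_distr vimage_def Int_def conj_commute)

lemma cdfdist: "prob_space M \<Longrightarrow> X \<in> borel_measurable M \<Longrightarrow> cdf_distribution (distr M borel X)"
  unfolding cdf_distribution_def real_distribution_def real_distribution_axioms_def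
  by (auto intro!: prob_space.prob_space_distr)

lemma quantile_eq: "prob_space M \<Longrightarrow> X \<in> borel_measurable M \<Longrightarrow>
   quantile M X = (\<lambda>u. Inf {t. u \<le> cdf (distr M borel X) t})"
  by (simp add: quantile_def cdfX_eq fun_eq_iff)

lemma Q_mono:
  assumes "prob_space M" "X \<in> borel_measurable M" "0 < u" "u \<le> v" "v < 1"
  shows "quantile M X u \<le> quantile M X v"
proof -
  interpret cdf_distribution "distr M borel X" using cdfdist assms by blast
  show ?thesis using mono_I assms unfolding quantile_eq[OF assms(1,2)] mono_on_def by auto
qed

lemma Q_meas:
  assumes "prob_space M" "X \<in> borel_measurable M"
  shows "quantile M X \<in> borel_measurable (restrict_space lborel {0<..<1})"
proof -
  interpret cdf_distribution "distr M borel X" using cdfdist assms by blast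
  have "quantile M X \<in> borel_measurable (restrict_space borel {0<..<1})"
    using measurable_CI quantile_eq[OF assms] by simp
  then show ?thesis
    by (subst measurable_cong_sets[OF sets_restrict_space_cong[OF sets_lborel] refl]) 
qed

lemma Q_distr:
  assumes "prob_space M" "X \<in> borel_measurable M"
  shows "distr (restrict_space lborel {0<..<1}) borel (quantile M X) = distr M borel X"
proof -
  interpret cdf_distribution "distr M borel X" using cdfdist assms by blast
  show ?thesis using distr_I_eq_M quantile_eq[OF assms] by simp
qed

lemma Q_meas_ind:
  fixes g :: "real \<Rightarrow> real"
  assumes "prob_space M" "X \<in> borel_measurable M" "g \<in> borel_measurable borel"
    "A \<in> sets borel" "A \<subseteq> {0<..<1}"
  shows "(\<lambda>u. indicator A u * g (quantile M X u)) \<in> borel_measurable lborel"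
proof -
  have "(\<lambda>u. g (quantile M X u)) \<in> borel_measurable (restrict_space lborel {0<..<1})"
    using Q_meas[OF assms(1,2)] assms(3) by measurable
  then have "(\<lambda>u. if u \<in> {0<..<1} then g (quantile M X u) else 0) \<in> borel_measurable lborel"
    by (subst (asm) measurable_restrict_space_iff[where c=0]) auto
  note mm = this
  have m: "(\<lambda>u. indicator A u * (if u \<in> {0<..<1} then g (quantile M X u) else 0)) \<in> borel_measurable lborel"
    using borel_measurable_times[OF borel_measurable_indicator[of A lborel] mm] assms(4) by simp
  show ?thesis
    by (rule measurable_cong[THEN iffD1, OF _ m]) (use assms(5) in \<open>auto simp: indicator_def\<close>)
qed

lemma Q_transform:
  fixes g :: "real \<Rightarrow> real"
  assumes "prob_space M" "X \<in> borel_measurable M" "g \<in> borel_measurable borel"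
  shows "(integrable M (\<lambda>x. g (X x)) \<longleftrightarrow> set_integrable lborel {0<..<1} (\<lambda>u. g (quantile M X u)))
     \<and> integral\<^sup>L M (\<lambda>x. g (X x)) = (LINT u:{0<..<1}|lborel. g (quantile M X u))"
proof -
  let ?O = "restrict_space lborel {0<..<1::real}"
  have qm: "quantile M X \<in> measurable ?O borel" using Q_meas[OF assms(1,2)] by simp
  have "integrable M (\<lambda>x. g (X x)) \<longleftrightarrow> integrable (distr M borel X) g"
    by (rule integrable_distr_eq[of X M borel g, symmetric]) (use assms in auto)
  also have "\<dots> \<longleftrightarrow> integrable (distr ?O borel (quantile M X)) g" using Q_distr[OF assms(1,2)] by simp
  also have "\<dots> \<longleftrightarrow> integrable ?O (\<lambda>u. g (quantile M X u))" using qm assms(3) by (simp add: integrable_distr_eq)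
  also have "\<dots> \<longleftrightarrow> set_integrable lborel {0<..<1} (\<lambda>u. g (quantile M X u))"
    unfolding set_integrable_def by (subst integrable_restrict_space) auto
  finally have 1: "integrable M (\<lambda>x. g (X x)) \<longleftrightarrow> set_integrable lborel {0<..<1} (\<lambda>u. g (quantile M X u))" .
  have "integral\<^sup>L M (\<lambda>x. g (X x)) = integral\<^sup>L (distr M borel X) g"
    using assms by (simp add: integral_distr)
  also have "\<dots> = integral\<^sup>L (distr ?O borel (quantile M X)) g" using Q_distr[OF assms(1,2)] by simp
  also have "\<dots> = integral\<^sup>L ?O (\<lambda>u. g (quantile M X u))" using qm assms(3) by (simp add: integral_distr)
  also have "\<dots> = (LINT u:{0<..<1}|lborel. g (quantile M X u))"
    unfolding set_lebesgue_integral_def by (subst integral_restrict_space) auto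
  finally show ?thesis using 1 by simp
qed



locale qworld =
  fixes Q :: "real \<Rightarrow> real" and a b :: real
  assumes Qmono: "\<And>u v. 0 < u \<Longrightarrow> u \<le> v \<Longrightarrow> v < 1 \<Longrightarrow> Q u \<le> Q v"
  and Qmeas: "\<And>(g::real\<Rightarrow>real) (A::real set). g \<in> borel_measurable borel \<Longrightarrow> A \<in> sets borel \<Longrightarrow> A \<subseteq> {0<..<1} \<Longrightarrow>
       (\<lambda>u. indicator A u * g (Q u)) \<in> borel_measurable lborel"
  and a0: "0 < a" and ab: "a < b" and b1: "b < 1"
begin

lemma sbm: fixes g :: "real \<Rightarrow> real" shows "g \<in> borel_measurable borel \<Longrightarrow> A \<in> sets borel \<Longrightarrow> A \<subseteq> {0<..<1} \<Longrightarrow>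
   set_borel_measurable lborel A (\<lambda>u. g (Q u))"
  unfolding set_borel_measurable_def using Qmeas by simp

lemma sint_bound:
  fixes g h :: "real \<Rightarrow> real"
  assumes "g \<in> borel_measurable borel" "A \<in> sets borel" "A \<subseteq> {0<..<1}"
    "set_integrable lborel A (\<lambda>u. h (Q u))" "\<And>u. u \<in> A \<Longrightarrow> \<bar>g (Q u)\<bar> \<le> \<bar>h (Q u)\<bar>"
  shows "set_integrable lborel A (\<lambda>u. g (Q u))"
  by (rule set_integrable_bound[OF assms(4) sbm[OF assms(1-3)]]) (use assms(5) in \<open>auto intro!: AE_I2\<close>)

lemma meas_finite: fixes A :: "real set" shows "A \<subseteq> {0<..<1} \<Longrightarrow> emeasure lborel A < \<infinity>"
proof -
  assume "A \<subseteq> {0<..<1::real}"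
  then have "emeasure lborel A \<le> emeasure lborel {0<..<1::real}" by (intro emeasure_mono) auto
  also have "\<dots> < \<infinity>" by simp
  finally show ?thesis .
qed

lemma sint_bdd:
  fixes g :: "real \<Rightarrow> real"
  assumes "g \<in> borel_measurable borel" "A \<in> sets borel" "A \<subseteq> {0<..<1}"
    "\<And>u. u \<in> A \<Longrightarrow> \<bar>g (Q u)\<bar> \<le> B"
  shows "set_integrable lborel A (\<lambda>u. g (Q u))"
  unfolding set_integrable_def
proof (rule integrableI_bounded_set[where A=A and B=B])
  show "(\<lambda>x. indicat_real A x *\<^sub>R g (Q x)) \<in> borel_measurable lborel"
    using Qmeas[OF assms(1-3)] by simp
qed (use assms meas_finite in \<open>auto intro!: AE_I2\<close>)

lemma sint_const:
  fixes A :: "real set"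
  assumes "A \<in> sets borel" "A \<subseteq> {0<..<1}"
  shows "set_integrable lborel A (\<lambda>u. c::real)" "(LINT u:A|lborel. c) = c * measure lborel A"
proof -
  have "integrable lborel (indicat_real A)" using assms meas_finite[OF assms(2)]
    by (intro integrable_real_indicator) auto
  then show "set_integrable lborel A (\<lambda>u. c::real)" unfolding set_integrable_def by simp
  show "(LINT u:A|lborel. c) = c * measure lborel A"
    unfolding set_lebesgue_integral_def using assms meas_finite[OF assms(2)] by simp
qed

lemma Qab: "a \<le> u \<Longrightarrow> u \<le> b \<Longrightarrow> Q a \<le> Q u \<and> Q u \<le> Q b"
  using Qmono a0 b1 by auto

lemma sint_ab:
  fixes g :: "real \<Rightarrow> real"
  assumes "continuous_on UNIV g"
  shows "set_integrable lborel {a..b} (\<lambda>u. g (Q u))"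
proof -
  have "compact (g ` {Q a..Q b})" by (intro compact_continuous_image continuous_on_subset[OF assms]) auto
  then obtain B where B: "\<And>t. t \<in> {Q a..Q b} \<Longrightarrow> norm (g t) \<le> B"
    using compact_imp_bounded bounded_iff by (metis image_eqI)
  show ?thesis
    by (rule sint_bdd[where B=B]) (use a0 b1 Qab B assms in \<open>auto intro: borel_measurable_continuous_onI\<close>)
qed

definition "I1 = (LINT u:{a..b}|lborel. Q u)"
definition "I2 = (LINT u:{a..b}|lborel. (Q u)\<^sup>2)"

lemma sq_expand: "(LINT u:{a..b}|lborel. (Q u - c)\<^sup>2) = I2 - 2*c*I1 + c\<^sup>2 * (b - a)"
proof -
  have sub: "{a..b} \<subseteq> {0<..<1}" using a0 b1 by auto
  have i1: "set_integrable lborel {a..b} (\<lambda>u. Q u)" using sint_ab[of "\<lambda>x. x"] by (simp add: continuous_on_id)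
  have i2: "set_integrable lborel {a..b} (\<lambda>u. (Q u)\<^sup>2)" using sint_ab[of "\<lambda>x. x\<^sup>2"] by (simp add: continuous_intros)
  have ic: "set_integrable lborel {a..b} (\<lambda>u. c\<^sup>2)" "(LINT u:{a..b}|lborel. c\<^sup>2) = c\<^sup>2 * (b - a)"
    using sint_const[of "{a..b}" "c\<^sup>2"] sub ab by auto
  have "(LINT u:{a..b}|lborel. (Q u - c)\<^sup>2) = (LINT u:{a..b}|lborel. ((Q u)\<^sup>2 - 2*c*Q u) + c\<^sup>2)"
    by (simp add: power2_diff algebra_simps)
  also have "\<dots> = (LINT u:{a..b}|lborel. ((Q u)\<^sup>2 - 2*c*Q u)) + c\<^sup>2 * (b - a)"
    using i1 i2 ic by (subst set_integral_add) auto
  also have "(LINT u:{a..b}|lborel. ((Q u)\<^sup>2 - 2*c*Q u)) = I2 - 2*c*I1"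
    using i1 i2 unfolding I1_def I2_def by (subst set_integral_diff) auto
  finally show ?thesis .
qed

lemma W_decomp:
  defines "m \<equiv> (1 / (b - a)) * I1"
  shows "(LINT u:{a..b}|lborel. (Q u - c)\<^sup>2)
     = (b - a) * ((1 / (b - a)) * (LINT u:{a..b}|lborel. (Q u - m)\<^sup>2)) + (b - a) * (m - c)\<^sup>2"
proof -
  have h: "I1 = (b - a) * m" using ab unfolding m_def by simp
  show ?thesis using ab unfolding sq_expand h by (simp add: field_simps power2_eq_square)
qed

end


lemma pt_bound:
  fixes y qa qb m q :: real
  assumes "qa \<le> y" "y \<le> qb" "1 < q" "q \<le> 2"
  shows "(y - max qa (min qb m))\<^sup>2 \<le> (qb - qa) powr (2 - q) * \<bar>y - m\<bar> powr q"
proof -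
  let ?c = "max qa (min qb m)"
  define d where "d = \<bar>y - ?c\<bar>"
  have d1: "d \<le> \<bar>y - m\<bar>" and d2: "d \<le> qb - qa" using assms unfolding d_def by auto
  show ?thesis
  proof (cases "d = 0")
    case True
    then show ?thesis unfolding d_def by simp
  next
    case False
    then have dp: "0 < d" unfolding d_def by simp
    have "(y - ?c)\<^sup>2 = d powr 2" using dp unfolding d_def by (simp add: powr_numeral)
    also have "\<dots> = d powr (2 - q) * d powr q" using dp by (simp add: powr_add[symmetric])
    also have "\<dots> \<le> (qb - qa) powr (2 - q) * \<bar>y - m\<bar> powr q"
      using dp d1 d2 assms by (intro mult_mono powr_mono2) auto
    finally show ?thesis .
  qed
qed

context qworld begin

lemma set_int_sub_le:
  fixes f :: "real \<Rightarrow> real"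
  assumes "set_integrable lborel A f" "B \<in> sets borel" "B \<subseteq> A" "\<And>u. u \<in> A \<Longrightarrow> 0 \<le> f u"
  shows "(LINT u:B|lborel. f u) \<le> (LINT u:A|lborel. f u)"
proof -
  have "set_integrable lborel B f" using set_integrable_subset[OF assms(1)] assms(2,3) by auto
  then show ?thesis using assms unfolding set_lebesgue_integral_def set_integrable_def
    by (intro integral_mono) (auto simp: indicator_def)
qed

lemma part2_u:
  fixes q m :: real
  assumes q: "1 < q" "q \<le> 2"
    and int: "set_integrable lborel {0<..<1} (\<lambda>u. \<bar>Q u - m\<bar> powr q)"
  defines "mab \<equiv> (1 / (b - a)) * I1"
  shows "(b - a) * ((1 / (b - a)) * (LINT u:{a..b}|lborel. (Q u - mab)\<^sup>2))
      \<le> (Q b - Q a) powr (2 - q) * (LINT u:{0<..<1}|lborel. \<bar>Q u - m\<bar> powr q)"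
proof -
  let ?c = "max (Q a) (min (Q b) m)"
  have sub: "{a..b} \<subseteq> {0<..<1}" using a0 b1 by auto
  have i1: "set_integrable lborel {a..b} (\<lambda>u. (Q u - ?c)\<^sup>2)" using sint_ab[of "\<lambda>x. (x - ?c)\<^sup>2"]
    by (simp add: continuous_intros)
  have i2: "set_integrable lborel {a..b} (\<lambda>u. \<bar>Q u - m\<bar> powr q)"
    using set_integrable_subset[OF int] sub by auto
  have "(b - a) * ((1 / (b - a)) * (LINT u:{a..b}|lborel. (Q u - mab)\<^sup>2))
     \<le> (LINT u:{a..b}|lborel. (Q u - ?c)\<^sup>2)"
    unfolding W_decomp[of ?c] mab_def using ab by simp
  also have "\<dots> \<le> (LINT u:{a..b}|lborel. (Q b - Q a) powr (2 - q) * \<bar>Q u - m\<bar> powr q)"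
    using i1 i2 Qab q by (intro set_integral_mono pt_bound) auto
  also have "\<dots> = (Q b - Q a) powr (2 - q) * (LINT u:{a..b}|lborel. \<bar>Q u - m\<bar> powr q)" by simp
  also have "\<dots> \<le> (Q b - Q a) powr (2 - q) * (LINT u:{0<..<1}|lborel. \<bar>Q u - m\<bar> powr q)"
    using int sub by (intro mult_left_mono set_int_sub_le) auto
  finally show ?thesis .
qed

end


lemma cs_set:
  fixes f :: "real \<Rightarrow> real" and A :: "real set"
  assumes A: "A \<in> sets borel" "emeasure lborel A < \<infinity>" "0 < measure lborel A"
    and i1: "set_integrable lborel A f" and i2: "set_integrable lborel A (\<lambda>u. (f u)\<^sup>2)"
  shows "(LINT u:A|lborel. f u)\<^sup>2 \<le> measure lborel A * (LINT u:A|lborel. (f u)\<^sup>2)"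
proof -
  define w where "w = measure lborel A"
  define S where "S = (LINT u:A|lborel. f u)"
  define F where "F = (LINT u:A|lborel. (f u)\<^sup>2)"
  define t where "t = S / w"
  have ic: "integrable lborel (indicat_real A)" using A by (intro integrable_real_indicator) auto
  have c1: "set_integrable lborel A (\<lambda>u. t\<^sup>2)" using ic unfolding set_integrable_def by simp
  have c2: "(LINT u:A|lborel. t\<^sup>2) = t\<^sup>2 * w"
    unfolding set_lebesgue_integral_def w_def using A by simp
  have "0 \<le> (LINT u:A|lborel. (f u - t)\<^sup>2)"
    unfolding set_lebesgue_integral_def by (intro integral_nonneg_AE) (auto simp: indicator_def)
  also have "(LINT u:A|lborel. (f u - t)\<^sup>2) = (LINT u:A|lborel. ((f u)\<^sup>2 - 2 * t * f u) + t\<^sup>2)"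
    by (simp add: power2_diff algebra_simps)
  also have "\<dots> = F - 2 * t * S + t\<^sup>2 * w"
    using i1 i2 c1 c2 unfolding F_def S_def
    by (subst set_integral_add) (auto simp: set_integral_diff)
  finally have "0 \<le> F - 2 * t * S + t\<^sup>2 * w" .
  then have "0 \<le> F - S\<^sup>2 / w" using A unfolding t_def w_def by (simp add: field_simps power2_eq_square)
  then show ?thesis using A unfolding w_def[symmetric] S_def[symmetric] F_def[symmetric]
    by (simp add: field_simps)
qed

context qworld begin

definition "ma = (LINT u:{0<..<a}|lborel. indicator {Q a} (Q u) :: real)"
definition "mb = (LINT u:{b<..<1}|lborel. indicator {Q b} (Q u) :: real)"
definition "Pa = (LINT u:{0<..<1}|lborel. indicator {Q a} (Q u) :: real)"
definition "Pb = (LINT u:{0<..<1}|lborel. indicator {Q b} (Q u) :: real)"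

lemma sint_ind: "A \<in> sets borel \<Longrightarrow> A \<subseteq> {0<..<1} \<Longrightarrow> B \<in> sets borel \<Longrightarrow>
   set_integrable lborel A (\<lambda>u. indicator B (Q u) :: real)"
  by (rule sint_bdd[where B=1]) (auto simp: indicator_def)

lemma sint_mul_ind:
  fixes \<phi> :: "real \<Rightarrow> real"
  assumes "\<phi> \<in> borel_measurable borel" "set_integrable lborel {0<..<1} (\<lambda>u. \<phi> (Q u))"
    "A \<in> sets borel" "A \<subseteq> {0<..<1}" "B \<in> sets borel"
  shows "set_integrable lborel A (\<lambda>u. \<phi> (Q u) * indicator B (Q u))"
proof -
  have i: "set_integrable lborel A (\<lambda>u. \<phi> (Q u))" using set_integrable_subset[OF assms(2)] assms by auto
  have m: "(\<lambda>t. \<phi> t * indicator B t) \<in> borel_measurable borel" using assms by measurable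
  show ?thesis
    by (rule sint_bound[where h=\<phi> and g="\<lambda>t. \<phi> t * indicator B t", OF m assms(3) assms(4) i])
      (auto simp: indicator_def)
qed

lemma low_split:
  fixes \<phi> :: "real \<Rightarrow> real"
  assumes phm: "\<phi> \<in> borel_measurable borel" and int: "set_integrable lborel {0<..<1} (\<lambda>u. \<phi> (Q u))"
  shows "(LINT u:{0<..<a}|lborel. \<phi> (Q u))
     = (LINT u:{0<..<1}|lborel. \<phi> (Q u) * indicator {..<Q a} (Q u)) + \<phi> (Q a) * ma"
proof -
  have s1: "{0<..<a} \<subseteq> {0<..<1}" "{a..<1} \<subseteq> {0<..<1}" using a0 b1 ab by auto
  have i1: "set_integrable lborel {0<..<a} (\<lambda>u. \<phi> (Q u) * indicator {..<Q a} (Q u))"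
    "set_integrable lborel {a..<1} (\<lambda>u. \<phi> (Q u) * indicator {..<Q a} (Q u))"
    using sint_mul_ind[OF phm int] s1 by auto
  have i2: "set_integrable lborel {0<..<a} (\<lambda>u. \<phi> (Q a) * indicator {Q a} (Q u))"
    using sint_ind[of "{0<..<a}" "{Q a}"] s1 by auto
  have "(LINT u:{0<..<a}|lborel. \<phi> (Q u))
     = (LINT u:{0<..<a}|lborel. \<phi> (Q u) * indicator {..<Q a} (Q u) + \<phi> (Q a) * indicator {Q a} (Q u))"
  proof (rule set_lebesgue_integral_cong)
    show "\<forall>x. x \<in> {0<..<a} \<longrightarrow> \<phi> (Q x) = \<phi> (Q x) * indicator {..<Q a} (Q x) + \<phi> (Q a) * indicator {Q a} (Q x)"
    proof (intro allI impI)
      fix x assume "x \<in> {0<..<a}"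
      then have "Q x \<le> Q a" using Qmono[of x a] b1 ab by auto
      then show "\<phi> (Q x) = \<phi> (Q x) * indicator {..<Q a} (Q x) + \<phi> (Q a) * indicator {Q a} (Q x)"
        by (auto simp: indicator_def)
    qed
  qed auto
  also have "\<dots> = (LINT u:{0<..<a}|lborel. \<phi> (Q u) * indicator {..<Q a} (Q u)) + \<phi> (Q a) * ma"
    using i1 i2 unfolding ma_def by (subst set_integral_add) auto
  also have "(LINT u:{0<..<a}|lborel. \<phi> (Q u) * indicator {..<Q a} (Q u))
      = (LINT u:{0<..<1}|lborel. \<phi> (Q u) * indicator {..<Q a} (Q u))"
  proof -
    have e: "{0<..<1::real} = {0<..<a} \<union> {a..<1}" using a0 b1 ab by auto
    have z: "(LINT u:{a..<1}|lborel. \<phi> (Q u) * indicator {..<Q a} (Q u)) = 0"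
    proof -
      have "(LINT u:{a..<1}|lborel. \<phi> (Q u) * indicator {..<Q a} (Q u)) = (LINT u:{a..<1}|lborel. 0)"
      proof (rule set_lebesgue_integral_cong, simp, intro allI impI)
        fix x assume "x \<in> {a..<1::real}"
        then have "Q a \<le> Q x" using Qmono[of a x] a0 by auto
        then show "\<phi> (Q x) * indicator {..<Q a} (Q x) = 0" by (auto simp: indicator_def)
      qed
      then show ?thesis by simp
    qed
    show ?thesis unfolding e using i1 z by (subst set_integral_Un) auto
  qed
  finally show ?thesis .
qed

lemma up_split:
  fixes \<phi> :: "real \<Rightarrow> real"
  assumes phm: "\<phi> \<in> borel_measurable borel" and int: "set_integrable lborel {0<..<1} (\<lambda>u. \<phi> (Q u))"
  shows "(LINT u:{b<..<1}|lborel. \<phi> (Q u))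
     = (LINT u:{0<..<1}|lborel. \<phi> (Q u) * indicator {Q b<..} (Q u)) + \<phi> (Q b) * mb"
proof -
  have s1: "{b<..<1} \<subseteq> {0<..<1}" "{0<..b} \<subseteq> {0<..<1}" using a0 b1 ab by auto
  have i1: "set_integrable lborel {b<..<1} (\<lambda>u. \<phi> (Q u) * indicator {Q b<..} (Q u))"
    "set_integrable lborel {0<..b} (\<lambda>u. \<phi> (Q u) * indicator {Q b<..} (Q u))"
    using sint_mul_ind[OF phm int] s1 by auto
  have i2: "set_integrable lborel {b<..<1} (\<lambda>u. \<phi> (Q b) * indicator {Q b} (Q u))"
    using sint_ind[of "{b<..<1}" "{Q b}"] s1 by auto
  have "(LINT u:{b<..<1}|lborel. \<phi> (Q u))
     = (LINT u:{b<..<1}|lborel. \<phi> (Q u) * indicator {Q b<..} (Q u) + \<phi> (Q b) * indicator {Q b} (Q u))"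
  proof (rule set_lebesgue_integral_cong)
    show "\<forall>x. x \<in> {b<..<1} \<longrightarrow> \<phi> (Q x) = \<phi> (Q x) * indicator {Q b<..} (Q x) + \<phi> (Q b) * indicator {Q b} (Q x)"
    proof (intro allI impI)
      fix x assume "x \<in> {b<..<1}"
      then have "Q b \<le> Q x" using Qmono[of b x] a0 ab by auto
      then show "\<phi> (Q x) = \<phi> (Q x) * indicator {Q b<..} (Q x) + \<phi> (Q b) * indicator {Q b} (Q x)"
        by (auto simp: indicator_def)
    qed
  qed auto
  also have "\<dots> = (LINT u:{b<..<1}|lborel. \<phi> (Q u) * indicator {Q b<..} (Q u)) + \<phi> (Q b) * mb"
    using i1 i2 unfolding mb_def by (subst set_integral_add) auto
  also have "(LINT u:{b<..<1}|lborel. \<phi> (Q u) * indicator {Q b<..} (Q u))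
      = (LINT u:{0<..<1}|lborel. \<phi> (Q u) * indicator {Q b<..} (Q u))"
  proof -
    have e: "{0<..<1::real} = {0<..b} \<union> {b<..<1}" using a0 b1 ab by auto
    have z: "(LINT u:{0<..b}|lborel. \<phi> (Q u) * indicator {Q b<..} (Q u)) = 0"
    proof -
      have "(LINT u:{0<..b}|lborel. \<phi> (Q u) * indicator {Q b<..} (Q u)) = (LINT u:{0<..b}|lborel. 0)"
      proof (rule set_lebesgue_integral_cong, simp, intro allI impI)
        fix x assume "x \<in> {0<..b::real}"
        then have "Q x \<le> Q b" using Qmono[of x b] b1 by auto
        then show "\<phi> (Q x) * indicator {Q b<..} (Q x) = 0" by (auto simp: indicator_def)
      qed
      then show ?thesis by simp
    qed
    show ?thesis unfolding e using i1 z by (subst set_integral_Un) auto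
  qed
  finally show ?thesis .
qed

end


context qworld begin

lemma m_bounds: "0 \<le> ma" "ma \<le> Pa" "0 \<le> mb" "mb \<le> Pb" "Q a = Q b \<Longrightarrow> ma + mb \<le> Pa"
proof -
  have s: "{0<..<a} \<subseteq> {0<..<1}" "{b<..<1} \<subseteq> {0<..<1}" using a0 b1 ab by auto
  show "0 \<le> ma" unfolding ma_def set_lebesgue_integral_def by (intro integral_nonneg_AE AE_I2) (auto simp: indicator_def)
  show "0 \<le> mb" unfolding mb_def set_lebesgue_integral_def by (intro integral_nonneg_AE AE_I2) (auto simp: indicator_def)
  show "ma \<le> Pa" unfolding ma_def Pa_def using s sint_ind[of "{0<..<1}" "{Q a}"]
    by (intro set_int_sub_le) auto
  show "mb \<le> Pb" unfolding mb_def Pb_def using s sint_ind[of "{0<..<1}" "{Q b}"]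
    by (intro set_int_sub_le) auto
  assume e: "Q a = Q b"
  have "ma + mb = (LINT u:{0<..<a} \<union> {b<..<1}|lborel. indicator {Q a} (Q u))"
    unfolding ma_def mb_def e using s ab sint_ind[of "{0<..<a}" "{Q b}"] sint_ind[of "{b<..<1}" "{Q b}"]
    by (subst set_integral_Un) auto
  also have "\<dots> \<le> Pa" unfolding Pa_def using s sint_ind[of "{0<..<1}" "{Q a}"]
    by (intro set_int_sub_le) auto
  finally show "ma + mb \<le> Pa" .
qed

lemma pt_ind:
  fixes \<phi> :: "real \<Rightarrow> real"
  shows "(LINT u:{0<..<1}|lborel. \<phi> (Q u) * indicator {c} (Q u)) = \<phi> c * (LINT u:{0<..<1}|lborel. indicator {c} (Q u))"
proof -
  have "(LINT u:{0<..<1}|lborel. \<phi> (Q u) * indicator {c} (Q u)) = (LINT u:{0<..<1}|lborel. \<phi> c * indicator {c} (Q u))"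
    by (rule set_lebesgue_integral_cong) (auto simp: indicator_def)
  then show ?thesis by simp
qed

lemma zf_identity:
  fixes \<phi> :: "real \<Rightarrow> real" and ca cb :: real
  assumes phm: "\<phi> \<in> borel_measurable borel" and int: "set_integrable lborel {0<..<1} (\<lambda>u. \<phi> (Q u))"
    and ca: "ca * Pa = ma" and cb: "cb * Pb = mb"
  defines "zf \<equiv> (\<lambda>t. indicator {..<Q a} t + indicator {Q b<..} t + ca * indicator {Q a} t + cb * indicator {Q b} t)"
  shows "set_integrable lborel {0<..<1} (\<lambda>u. \<phi> (Q u) * zf (Q u))"
    "(LINT u:{0<..<1}|lborel. \<phi> (Q u) * zf (Q u)) = (LINT u:{0<..<a} \<union> {b<..<1}|lborel. \<phi> (Q u))"
proof -
  let ?O = "{0<..<1::real}"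
  have s: "{0<..<a} \<subseteq> {0<..<1}" "{b<..<1} \<subseteq> {0<..<1}" using a0 b1 ab by auto
  have i1: "set_integrable lborel ?O (\<lambda>u. \<phi> (Q u) * indicator {..<Q a} (Q u))"
    "set_integrable lborel ?O (\<lambda>u. \<phi> (Q u) * indicator {Q b<..} (Q u))"
    "set_integrable lborel ?O (\<lambda>u. \<phi> (Q u) * indicator {Q a} (Q u))"
    "set_integrable lborel ?O (\<lambda>u. \<phi> (Q u) * indicator {Q b} (Q u))"
    using sint_mul_ind[OF phm int] by auto
  have i2: "set_integrable lborel ?O (\<lambda>u. ca * (\<phi> (Q u) * indicator {Q a} (Q u)))"
    "set_integrable lborel ?O (\<lambda>u. cb * (\<phi> (Q u) * indicator {Q b} (Q u)))"
    using i1 by auto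
  have eq: "\<And>u. \<phi> (Q u) * zf (Q u) = ((\<phi> (Q u) * indicator {..<Q a} (Q u) + \<phi> (Q u) * indicator {Q b<..} (Q u))
      + ca * (\<phi> (Q u) * indicator {Q a} (Q u))) + cb * (\<phi> (Q u) * indicator {Q b} (Q u))"
    unfolding zf_def by (simp add: algebra_simps)
  show "set_integrable lborel ?O (\<lambda>u. \<phi> (Q u) * zf (Q u))"
    unfolding eq using i1 i2 by (intro set_integral_add) auto
  have "(LINT u:?O|lborel. \<phi> (Q u) * zf (Q u))
     = (LINT u:?O|lborel. \<phi> (Q u) * indicator {..<Q a} (Q u)) + (LINT u:?O|lborel. \<phi> (Q u) * indicator {Q b<..} (Q u))
       + ca * (\<phi> (Q a) * Pa) + cb * (\<phi> (Q b) * Pb)"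
    unfolding eq using i1 i2
    by (simp add: set_integral_add pt_ind Pa_def Pb_def)
  also have "\<dots> = (LINT u:{0<..<a}|lborel. \<phi> (Q u)) + (LINT u:{b<..<1}|lborel. \<phi> (Q u))"
    unfolding low_split[OF phm int] up_split[OF phm int]
    using ca cb by (simp add: algebra_simps flip: ca cb)
  also have "\<dots> = (LINT u:{0<..<a} \<union> {b<..<1}|lborel. \<phi> (Q u))"
    using set_integrable_subset[OF int] s ab by (subst set_integral_Un) auto
  finally show "(LINT u:{0<..<1}|lborel. \<phi> (Q u) * zf (Q u)) = (LINT u:{0<..<a} \<union> {b<..<1}|lborel. \<phi> (Q u))" .
qed

end


context qworld begin

lemma meas_out: "measure lborel ({0<..<a} \<union> {b<..<1}) = 1 - (b - a)"
proof -
  have "measure lborel ({0<..<a} \<union> {b<..<1}) = measure lborel {0<..<a} + measure lborel {b<..<1::real}"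
    using ab a0 b1 by (intro measure_Union) auto
  then show ?thesis using a0 b1 ab by simp
qed

lemma part3_u:
  fixes m :: real
  assumes iQ: "set_integrable lborel {0<..<1} Q"
    and iQ2: "set_integrable lborel {0<..<1} (\<lambda>u. (Q u - m)\<^sup>2)"
    and hm: "(LINT u:{0<..<1}|lborel. Q u) = m"
  defines "mab \<equiv> (1 / (b - a)) * I1"
  defines "sab2 \<equiv> (1 / (b - a)) * (LINT u:{a..b}|lborel. (Q u - mab)\<^sup>2)"
  defines "Ow \<equiv> (LINT u:{0<..<a} \<union> {b<..<1}|lborel. (Q u - m)\<^sup>2)"
  shows "(LINT u:{0<..<1}|lborel. (Q u - m)\<^sup>2) \<le> (b - a) * sab2 + Ow / (b - a)"
    "(b - a) * sab2 \<le> (LINT u:{0<..<1}|lborel. (Q u - m)\<^sup>2)"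
    "0 \<le> Ow" "0 \<le> sab2"
proof -
  let ?out = "{0<..<a} \<union> {b<..<1::real}"
  let ?p = "b - a"
  have e: "{0<..<1::real} = ?out \<union> {a..b}" using a0 b1 ab by auto
  have s: "?out \<subseteq> {0<..<1}" "{a..b} \<subseteq> {0<..<1}" using a0 b1 ab by auto
  have d: "?out \<inter> {a..b} = {}" by auto
  have iQm: "set_integrable lborel {0<..<1} (\<lambda>u. Q u - m)"
    using iQ sint_const[of "{0<..<1}" m] by (intro set_integral_diff) auto
  have io: "set_integrable lborel ?out (\<lambda>u. Q u - m)" "set_integrable lborel ?out (\<lambda>u. (Q u - m)\<^sup>2)"
    "set_integrable lborel {a..b} (\<lambda>u. Q u - m)" "set_integrable lborel {a..b} (\<lambda>u. (Q u - m)\<^sup>2)"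
    using set_integrable_subset[OF iQm] set_integrable_subset[OF iQ2] s by auto
  define W where "W = (LINT u:{a..b}|lborel. (Q u - m)\<^sup>2)"
  define Si where "Si = (LINT u:{a..b}|lborel. Q u - m)"
  define So where "So = (LINT u:?out|lborel. Q u - m)"
  have V: "(LINT u:{0<..<1}|lborel. (Q u - m)\<^sup>2) = Ow + W"
    unfolding Ow_def W_def by (subst e, subst set_integral_Un) (use d io in auto)
  have "m - m = (LINT u:{0<..<1}|lborel. Q u - m)"
    using iQ sint_const[of "{0<..<1}" m] hm by (subst set_integral_diff) auto
  also have "\<dots> = So + Si"
    unfolding So_def Si_def by (subst e, subst set_integral_Un) (use d io in auto)
  finally have SS: "Si = - So" by simp
  have CS: "So\<^sup>2 \<le> (1 - ?p) * Ow"
    using cs_set[of ?out "\<lambda>u. Q u - m"] io meas_out meas_finite[OF s(1)] a0 b1 ab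
    unfolding So_def Ow_def by auto
  have Sim: "Si = ?p * (mab - m)"
  proof -
    have "Si = I1 - m * ?p" unfolding Si_def I1_def
      using sint_const[of "{a..b}" m] s sint_ab[of "\<lambda>x. x"] ab
      by (subst set_integral_diff) (auto simp: continuous_on_id)
    moreover have "?p * ((1 / ?p) * I1) = I1" using ab by simp
    ultimately show ?thesis unfolding mab_def by (simp add: right_diff_distrib algebra_simps)
  qed
  have Wd: "W = ?p * sab2 + ?p * (mab - m)\<^sup>2"
    unfolding W_def sab2_def mab_def by (rule W_decomp)
  show Ow0: "0 \<le> Ow" unfolding Ow_def set_lebesgue_integral_def by (intro integral_nonneg_AE AE_I2) auto
  show S0: "0 \<le> sab2" unfolding sab2_def set_lebesgue_integral_def using ab
    by (intro mult_nonneg_nonneg integral_nonneg_AE AE_I2) auto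
  have "?p * (mab - m)\<^sup>2 = Si\<^sup>2 / ?p" unfolding Sim using ab by (simp add: field_simps power2_eq_square)
  also have "\<dots> = So\<^sup>2 / ?p" using SS by simp
  also have "\<dots> \<le> (1 - ?p) * Ow / ?p" using CS ab by (intro divide_right_mono) auto
  finally have "W \<le> ?p * sab2 + (1 - ?p) * Ow / ?p" unfolding Wd by simp
  then have "Ow + W \<le> ?p * sab2 + Ow / ?p" using ab by (simp add: field_simps)
  then show "(LINT u:{0<..<1}|lborel. (Q u - m)\<^sup>2) \<le> ?p * sab2 + Ow / ?p" unfolding V .
  have "0 \<le> ?p * (mab - m)\<^sup>2" using ab by simp
  then show "?p * sab2 \<le> (LINT u:{0<..<1}|lborel. (Q u - m)\<^sup>2)" unfolding V Wd using Ow0 by linarith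
qed

end


lemma abs_powr2: "\<bar>y::real\<bar> powr 2 = y\<^sup>2"
  by simp

lemma qworld_quantile:
  assumes "prob_space M" "X \<in> borel_measurable M" "0 < a" "a < b" "b < 1"
  shows "qworld (quantile M X) a b"
proof
  show "\<And>u v. 0 < u \<Longrightarrow> u \<le> v \<Longrightarrow> v < 1 \<Longrightarrow> quantile M X u \<le> quantile M X v"
    using Q_mono[OF assms(1,2)] by blast
  show "\<And>(g::real\<Rightarrow>real) A. g \<in> borel_measurable borel \<Longrightarrow> A \<in> sets borel \<Longrightarrow> A \<subseteq> {0<..<1} \<Longrightarrow>
       (\<lambda>u. indicator A u * g (quantile M X u)) \<in> borel_measurable lborel"
    using Q_meas_ind[OF assms(1,2)] by blast
qed (use assms in auto)

theorem proposition4p2: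
  fixes M :: "'a measure" and X :: "'a \<Rightarrow> real" and a b \<xi> :: real
  assumes "prob_space M"
    and "X \<in> borel_measurable M"
    and "integrable M X"
    and "0 < a" and "a < b" and "b < 1"
    and "\<xi> = 1 - (b - a)"
  shows "(integrable M (\<lambda>x. (X x - meanX M X)\<^sup>2) \<longrightarrow>
            sigma_ab M X a b \<le> sigmaX M X / (1 - \<xi>))
       \<and> (\<forall>q::real. 1 < q \<and> q \<le> 2 \<and> integrable M (\<lambda>x. \<bar>X x - meanX M X\<bar> powr q) \<longrightarrow>
            sigma_ab M X a b \<le> sqrt 2 * nu M X q powr (q / 2) * Delta_ab M X a b powr (1 - q / 2)
                                  / (1 - \<xi>))
       \<and> (integrable M (\<lambda>x. (X x - meanX M X)\<^sup>2) \<and> \<xi> < 1 / 2 \<and> rho2 M X \<xi> < 1 / 3 \<longrightarrow>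
            sigmaX M X \<le> sqrt ((1 - \<xi>) / (1 - ((2 - \<xi>) / (1 - \<xi>)) * (rho2 M X \<xi>)\<^sup>2))
                           * sigma_ab M X a b)"
proof -
  note P = assms(1) and Xm = assms(2)
  interpret qworld "quantile M X" a b using qworld_quantile assms by blast
  define Q where "Q = quantile M X"
  have Q_def': "\<And>u. Q u = quantile M X u" unfolding Q_def by simp
  define \<mu> where "\<mu> = meanX M X"
  define p where "p = b - a"
  have p0: "0 < p" "p \<le> 1" using assms unfolding p_def by auto
  have xi: "1 - \<xi> = p" using assms unfolding p_def by simp
  define mab where "mab = (1 / (b - a)) * I1"
  define sab2 where "sab2 = (1 / (b - a)) * (LINT u:{a..b}|lborel. (Q u - mab)\<^sup>2)"
  have sab: "sigma_ab M X a b = sqrt sab2"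
    unfolding sigma_ab_def sab2_def mab_def mu_ab_def I1_def Q_def ..
  have sab0: "0 \<le> sab2" unfolding sab2_def set_lebesgue_integral_def using assms
    by (intro mult_nonneg_nonneg integral_nonneg_AE AE_I2) auto
  have iQ: "set_integrable lborel {0<..<1} Q" and hm: "(LINT u:{0<..<1}|lborel. Q u) = \<mu>"
    using Q_transform[OF P Xm, of "\<lambda>t. t"] assms(3) unfolding Q_def \<mu>_def meanX_def by auto
  have part1_aux: "set_integrable lborel {0<..<1} (\<lambda>u. (Q u - \<mu>)\<^sup>2) \<and>
      sigmaX M X = sqrt (LINT u:{0<..<1}|lborel. (Q u - \<mu>)\<^sup>2)"
    if int2: "integrable M (\<lambda>x. (X x - \<mu>)\<^sup>2)"
  proof -
    have T: "set_integrable lborel {0<..<1} (\<lambda>u. (Q u - \<mu>)\<^sup>2)"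
      "integral\<^sup>L M (\<lambda>x. (X x - \<mu>)\<^sup>2) = (LINT u:{0<..<1}|lborel. (Q u - \<mu>)\<^sup>2)"
      using Q_transform[OF P Xm, of "\<lambda>t. (t - \<mu>)\<^sup>2"] int2 unfolding Q_def by auto
    have "sigmaX M X = (integral\<^sup>L M (\<lambda>x. (X x - \<mu>)\<^sup>2)) powr (1/2)"
      unfolding sigmaX_def nu_def \<mu>_def[symmetric] abs_powr2 by simp
    also have "\<dots> = sqrt (integral\<^sup>L M (\<lambda>x. (X x - \<mu>)\<^sup>2))"
      by (intro powr_half_sqrt integral_nonneg_AE) auto
    finally show ?thesis using T by simp
  qed
  have P1: "sigma_ab M X a b \<le> sigmaX M X / (1 - \<xi>)"
    if int2: "integrable M (\<lambda>x. (X x - meanX M X)\<^sup>2)"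
  proof -
    have iQ2: "set_integrable lborel {0<..<1} (\<lambda>u. (Q u - \<mu>)\<^sup>2)"
      and sx: "sigmaX M X = sqrt (LINT u:{0<..<1}|lborel. (Q u - \<mu>)\<^sup>2)"
      using part1_aux int2 unfolding \<mu>_def by auto
    define V where "V = (LINT u:{0<..<1}|lborel. (Q u - \<mu>)\<^sup>2)"
    have "p * sab2 \<le> V"
      using part3_u(2)[OF iQ[unfolded Q_def] iQ2[unfolded Q_def] hm[unfolded Q_def]]
      unfolding V_def sab2_def mab_def p_def Q_def .
    then have "sab2 \<le> V / p" using p0 by (simp add: field_simps)
    also have "\<dots> \<le> V / p\<^sup>2" using p0 \<open>p * sab2 \<le> V\<close> sab0
      by (intro divide_left_mono) (auto simp: power2_eq_square mult_le_cancel_left1 intro: order.trans[OF _ \<open>p * sab2 \<le> V\<close>])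
    finally have "sqrt sab2 \<le> sqrt (V / p\<^sup>2)" by simp
    also have "\<dots> = sqrt V / p" using p0 by (simp add: real_sqrt_divide)
    finally show ?thesis unfolding sab sx xi V_def .
  qed
  have P2: "sigma_ab M X a b \<le> sqrt 2 * nu M X q powr (q / 2) * Delta_ab M X a b powr (1 - q / 2) / (1 - \<xi>)"
    if q1: "1 < q" and q2: "q \<le> 2" and intq: "integrable M (\<lambda>x. \<bar>X x - meanX M X\<bar> powr q)" for q :: real
  proof -
    define Nq where "Nq = integral\<^sup>L M (\<lambda>x. \<bar>X x - \<mu>\<bar> powr q)"
    have T: "set_integrable lborel {0<..<1} (\<lambda>u. \<bar>quantile M X u - \<mu>\<bar> powr q)"
      "Nq = (LINT u:{0<..<1}|lborel. \<bar>quantile M X u - \<mu>\<bar> powr q)"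
      using Q_transform[OF P Xm, of "\<lambda>t. \<bar>t - \<mu>\<bar> powr q"] intq unfolding Nq_def \<mu>_def by auto
    define A where "A = Delta_ab M X a b powr (2 - q)"
    have D0: "0 \<le> Delta_ab M X a b" unfolding Delta_ab_def using Qab[of b] assms by auto
    have N0: "0 \<le> Nq" unfolding Nq_def by (intro integral_nonneg_AE) auto
    have A0: "0 \<le> A" unfolding A_def by simp
    have "p * sab2 \<le> A * Nq"
      using part2_u[OF q1 q2 T(1)] unfolding T(2)[symmetric] A_def Delta_ab_def sab2_def mab_def p_def Q_def .
    then have "sab2 \<le> A * Nq / p" using p0 by (simp add: field_simps)
    also have "\<dots> \<le> 2 * (A * Nq) / p\<^sup>2"
    proof -
      have "p\<^sup>2 \<le> 2 * p" using p0 by (simp add: power2_eq_square)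
      then have "1 / p \<le> 2 / p\<^sup>2" using p0 by (simp add: field_simps)
      then show ?thesis using A0 N0 mult_left_mono[OF \<open>1 / p \<le> 2 / p\<^sup>2\<close>, of "A * Nq"] by (simp add: field_simps)
    qed
    finally have "sqrt sab2 \<le> sqrt (2 * (A * Nq) / p\<^sup>2)" by simp
    also have "\<dots> = sqrt 2 * sqrt Nq * sqrt A / p" using p0 by (simp add: real_sqrt_divide real_sqrt_mult)
    also have "sqrt Nq = nu M X q powr (q / 2)"
      unfolding nu_def \<mu>_def[symmetric] Nq_def[symmetric] powr_powr using q1 N0 by (simp add: powr_half_sqrt)
    also have "sqrt A = Delta_ab M X a b powr (1 - q / 2)"
      unfolding A_def using powr_half_sqrt_powr[OF D0, of "2 - q"] by (simp add: diff_divide_distrib)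
    finally show ?thesis unfolding sab xi .
  qed
  have P3: "sigmaX M X \<le> sqrt ((1 - \<xi>) / (1 - ((2 - \<xi>) / (1 - \<xi>)) * (rho2 M X \<xi>)\<^sup>2)) * sigma_ab M X a b"
    if int2: "integrable M (\<lambda>x. (X x - meanX M X)\<^sup>2)" and xh: "\<xi> < 1 / 2" and rh: "rho2 M X \<xi> < 1 / 3"
  proof -
    have iQ2: "set_integrable lborel {0<..<1} (\<lambda>u. (Q u - \<mu>)\<^sup>2)"
      and sx: "sigmaX M X = sqrt (LINT u:{0<..<1}|lborel. (Q u - \<mu>)\<^sup>2)"
      using part1_aux int2 unfolding \<mu>_def by auto
    define V where "V = (LINT u:{0<..<1}|lborel. (Q u - \<mu>)\<^sup>2)"
    have VM: "integral\<^sup>L M (\<lambda>x. (X x - \<mu>)\<^sup>2) = V"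
      using Q_transform[OF P Xm, of "\<lambda>t. (t - \<mu>)\<^sup>2"] unfolding V_def Q_def by auto
    have int2': "integrable M (\<lambda>x. (X x - \<mu>)\<^sup>2)" using int2 unfolding \<mu>_def .
    define Ow where "Ow = (LINT u:{0<..<a} \<union> {b<..<1}|lborel. (Q u - \<mu>)\<^sup>2)"
    have main: "V \<le> p * sab2 + Ow / p" "0 \<le> Ow"
      using part3_u(1,3)[OF iQ[unfolded Q_def] iQ2[unfolded Q_def] hm[unfolded Q_def]]
      unfolding V_def sab2_def mab_def p_def Q_def Ow_def by auto
    have V0: "0 \<le> V" unfolding V_def set_lebesgue_integral_def by (intro integral_nonneg_AE AE_I2) auto
    have OwV: "Ow \<le> V" unfolding Ow_def V_def
      using iQ2 assms by (intro set_int_sub_le) auto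
    define \<rho> where "\<rho> = rho2 M X \<xi>"
    have key: "0 \<le> \<rho> \<and> Ow \<le> \<rho>\<^sup>2 * V"
    proof (cases "sigmaX M X = 0")
      case True
      then have "V = 0" using sx V0 unfolding V_def by simp
      then show ?thesis using True OwV unfolding \<rho>_def rho2_def by simp
    next
      case False
      then have s0: "0 < sigmaX M X" using sx V0 unfolding V_def by simp
      define ca where "ca = ma / Pa"
      define cb where "cb = mb / Pb"
      have caP: "ca * Pa = ma" using m_bounds unfolding ca_def by (cases "Pa = 0") auto
      have cbP: "cb * Pb = mb" using m_bounds unfolding cb_def by (cases "Pb = 0") auto
      have ca01: "0 \<le> ca" "ca \<le> 1" using m_bounds unfolding ca_def by (auto simp: divide_le_eq_1)
      have cb01: "0 \<le> cb" "cb \<le> 1" using m_bounds unfolding cb_def by (auto simp: divide_le_eq_1)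
      have cab: "ca + cb \<le> 1" if "quantile M X a = quantile M X b"
      proof -
        have "Pa = Pb" unfolding Pa_def Pb_def using that by simp
        then have "ca + cb = (ma + mb) / Pa" unfolding ca_def cb_def by (simp add: add_divide_distrib)
        then show ?thesis using m_bounds that by (auto simp: divide_le_eq_1)
      qed
      define zf where "zf = (\<lambda>t. indicator {..<quantile M X a} t + indicator {quantile M X b<..} t
           + ca * indicator {quantile M X a} t + cb * indicator {quantile M X b} t :: real)"
      have zfm: "zf \<in> borel_measurable borel" unfolding zf_def by measurable
      have qab: "quantile M X a \<le> quantile M X b" using Qab[of b] assms by auto
      have zf01: "0 \<le> zf t \<and> zf t \<le> 1" for t
        unfolding zf_def using ca01 cb01 cab qab by (auto simp: indicator_def)
      define Z where "Z = (\<lambda>x. zf (X x))"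
      have Zm: "Z \<in> borel_measurable M" unfolding Z_def using zfm Xm by measurable
      have iO: "set_integrable lborel {0<..<1::real} (\<lambda>u. 1::real)"
        by (rule sint_const(1)) auto
      have EZ: "(\<integral>x. Z x \<partial>M) = \<xi>"
      proof -
        have "(\<integral>x. Z x \<partial>M) = (LINT u:{0<..<1}|lborel. zf (quantile M X u))"
          using Q_transform[OF P Xm zfm] unfolding Z_def by auto
        also have "\<dots> = (LINT u:{0<..<1}|lborel. 1 * zf (quantile M X u))" by simp
        also have "\<dots> = (LINT u:{0<..<a} \<union> {b<..<1}|lborel. 1)"
          using zf_identity(2)[of "\<lambda>t. 1", OF _ _ caP cbP] iO unfolding zf_def by simp
        also have "\<dots> = \<xi>"
        proof -
          have "{0<..<a} \<union> {b<..<1} \<subseteq> {0<..<1::real}" using assms by auto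
          then show ?thesis using sint_const(2)[of "{0<..<a} \<union> {b<..<1}" 1] meas_out assms by simp
        qed
        finally show ?thesis .
      qed
      have EXZ: "(\<integral>x. (X x - meanX M X)\<^sup>2 * Z x \<partial>M) = Ow"
      proof -
        have gm: "(\<lambda>t. (t - \<mu>)\<^sup>2 * zf t) \<in> borel_measurable borel" using zfm by measurable
        have "(\<integral>x. (X x - meanX M X)\<^sup>2 * Z x \<partial>M) = (LINT u:{0<..<1}|lborel. (quantile M X u - \<mu>)\<^sup>2 * zf (quantile M X u))"
          using Q_transform[OF P Xm gm] unfolding Z_def \<mu>_def by auto
        also have "\<dots> = Ow"
          using zf_identity(2)[of "\<lambda>t. (t - \<mu>)\<^sup>2", OF _ _ caP cbP] iQ2 unfolding zf_def Ow_def Q_def by simp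
        finally show ?thesis .
      qed
      define S where "S = {sqrt (\<integral>x. (X x - meanX M X)\<^sup>2 * Z x \<partial>M) / sigmaX M X | Z.
                  Z \<in> borel_measurable M \<and> (\<forall>x\<in>space M. 0 \<le> Z x \<and> Z x \<le> 1)
                  \<and> (\<integral>x. Z x \<partial>M) \<le> \<xi>}"
      have rS: "\<rho> = Sup S" unfolding \<rho>_def rho2_def S_def using False by simp
      have inS: "sqrt Ow / sigmaX M X \<in> S"
        unfolding S_def using Zm zf01 EZ EXZ unfolding Z_def by (intro CollectI exI[of _ Z]) (auto simp: Z_def)
      have bdd: "bdd_above S"
      proof (rule bdd_aboveI[where M=1])
        fix y assume "y \<in> S"
        then obtain Z' where y: "y = sqrt (\<integral>x. (X x - meanX M X)\<^sup>2 * Z' x \<partial>M) / sigmaX M X"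
          and Z'm: "Z' \<in> borel_measurable M" and Z'b: "\<forall>x\<in>space M. 0 \<le> Z' x \<and> Z' x \<le> 1"
          unfolding S_def by blast
        have iZ: "integrable M (\<lambda>x. (X x - \<mu>)\<^sup>2 * Z' x)"
          by (rule Bochner_Integration.integrable_bound[OF int2']) (use Z'm Xm Z'b in \<open>auto intro!: AE_I2 mult_left_le\<close>)
        have "(\<integral>x. (X x - \<mu>)\<^sup>2 * Z' x \<partial>M) \<le> V"
          unfolding VM[symmetric] using iZ int2' Z'b by (intro integral_mono) (auto intro!: mult_left_le)
        then have "sqrt (\<integral>x. (X x - \<mu>)\<^sup>2 * Z' x \<partial>M) \<le> sigmaX M X" unfolding sx V_def by simp
        then show "y \<le> 1" unfolding y \<mu>_def using s0 by simp
      qed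
      have le: "sqrt Ow / sigmaX M X \<le> \<rho>" unfolding rS using inS bdd by (rule cSup_upper)
      have r0: "0 \<le> \<rho>" using le s0 main(2) by (meson divide_nonneg_pos order.trans real_sqrt_ge_zero)
      have "sqrt Ow \<le> \<rho> * sigmaX M X" using le s0 by (simp add: divide_le_eq)
      then have "(sqrt Ow)\<^sup>2 \<le> (\<rho> * sigmaX M X)\<^sup>2" using main(2) by (intro power_mono) auto
      then have "Ow \<le> \<rho>\<^sup>2 * V" using main(2) V0 unfolding sx V_def[symmetric] by (simp add: power_mult_distrib)
      then show ?thesis using r0 by simp
    qed
    define r where "r = \<rho>\<^sup>2"
    have r0: "0 \<le> r" unfolding r_def by simp
    have r19: "r < 1/9"
    proof -
      have "\<rho> * \<rho> < (1/3) * (1/3)" using key rh unfolding \<rho>_def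
        by (intro mult_strict_mono) auto
      then show ?thesis unfolding r_def by (simp add: power2_eq_square)
    qed
    have ph: "1/2 < p" using xh xi by simp
    have Deq: "1 - ((2 - \<xi>) / (1 - \<xi>)) * (rho2 M X \<xi>)\<^sup>2 = 1 - ((1 + p) / p) * r"
    proof -
      have "2 - \<xi> = 1 + p" using xi by simp
      then show ?thesis unfolding r_def \<rho>_def xi by simp
    qed
    have "(1 + p) / p * r < 3 * (1/9)"
    proof (rule mult_strict_mono)
      show "(1 + p) / p < 3" using ph by (simp add: field_simps)
    qed (use r0 r19 ph in auto)
    then have Dpos: "0 < 1 - ((1 + p) / p) * r" by linarith
    define D where "D = 1 - ((1 + p) / p) * r"
    have "V * D = V - r * V / p - r * V" unfolding D_def using p0 by (simp add: field_simps)
    also have "\<dots> \<le> V - r * V / p" using r0 V0 by simp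
    also have "\<dots> \<le> p * sab2"
    proof -
      have "Ow / p \<le> r * V / p" using key p0 unfolding r_def by (intro divide_right_mono) auto
      then show ?thesis using main(1) by simp
    qed
    finally have "V \<le> p / D * sab2" using Dpos unfolding D_def[symmetric] by (simp add: field_simps)
    then have "sqrt V \<le> sqrt (p / D * sab2)" by simp
    also have "\<dots> = sqrt (p / D) * sqrt sab2" by (simp only: real_sqrt_mult)
    finally have fin: "sqrt V \<le> sqrt (p / D) * sqrt sab2" .
    have E: "(1 - \<xi>) / (1 - ((2 - \<xi>) / (1 - \<xi>)) * (rho2 M X \<xi>)\<^sup>2) = p / D"
      by (simp only: Deq D_def[symmetric]) (simp add: xi)
    show ?thesis unfolding E using fin unfolding sx V_def[symmetric] sab .
  qed
  show ?thesis using P1 P2 P3 by blast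
qed


end
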